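(* Let $\bar\nu\in\Pi_{2,SR}$ be an essentially proper policy of player II in a finite-space SSP game (as in the context) satisfying the Finite-Space SSP Game Model Assumption. Then the single-player problem $\mathrm{SSP}_{\bar\nu}$ satisfies the SSP Model Assumption: there exists a proper policy among its stationary deterministic policies, and every improper stationary deterministic policy incurs infinite cost for at least one initial state.
   Context: Finite-space game: $S=\{1,\dots,n\}$, $S_o=S\cup\{0\}$, $0$ absorbing cost-free termination state. At $i\in S$ players I and II have finite control sets $U(i),V(i)$; under $(u,v)$ the state moves to $j\in S_o$ w.p. $p_{ij}(u,v)$ with transition cost $\hat g(i,u,v,j)$ paid by player I; $g(i,u,v)$ is the expected one-stage cost. $J(i;\pi_1,\pi_2)=\liminf_{t\to\infty}E_{\pi_1\pi_2}[\sum_{k=0}^t\hat g(i_k,u_k,v_k,i_{k+1})\mid i_0=i]$. $\Pi_{1,SR},\Pi_{2,SR}$: stationary randomized policies ($\mu(\cdot\mid i)\in\mathcal P(U(i))$, $\nu(\cdot\mid i)\in\mathcal P(V(i))$). Prolonging pair: for some initial state the termination state is with positive probability never reached; non-prolonging otherwise. $\nu\in\Pi_{2,SR}$ is essentially proper if some $\mu\in\Pi_{1,SR}$ makes $(\mu,\nu)$ non-prolonging and every $\mu\in\Pi_{1,SR}$ with $(\mu,\nu)$ prolonging has $J(i;\mu,\nu)=+\infty$ for some $i$. Finite-Space SSP Game Model Assumption: (i) there is $\bar\mu\in\Pi_{1,SR}$ with $J(i;\bar\mu,\nu)<+\infty$ for all $\nu\in\Pi_{2,SR}$, all $i$; (ii)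 there is $\bar\nu\in\Pi_{2,SR}$ with $J(i;\mu,\bar\nu)>-\infty$ for all $\mu$, all $i$; (iii) every prolonging pair in $\Pi_{1,SR}\times\Pi_{2,SR}$ has $J(i;\mu,\nu)\in\{\pm\infty\}$ for some $i$. $R=\{(i,u,v):i\in S,u\in U(i),v\in V(i)\}$. $\mathrm{SSP}_{\bar\nu}$ is the single-player (player I, cost-minimizing) problem with state space $S_o\cup R$ and cost-free termination state $0$: from $\ell=(i,u,v)\in R$ the system moves (uncontrolled) to $j\in S_o$ w.p. $p_{ij}(u,v)$ with expected one-stage cost $g(i,u,v)$; at $i\in S$ the control set is $U(i)$ and control $u$ moves the system to $j\in S_o$ w.p. $p_{\bar\nu,ij}(u)=\sum_{v\in V(i)}\bar\nu(v\mid i)p_{ij}(u,v)$ with expected one-stage cost $g_{\bar\nu}(i,u)=\sum_{v}\bar\nu(v\mid i)g(i,u,v)$. A policy of a single-player SSP is proper if under it the termination state is reached w.p.1 from every initial state, and improper otherwise; costs of policies are total expected costs (liminf of expected partial sums). *)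

theory Defs
  imports Complex_Main "HOL-Library.Extended_Real"
begin

fun mc_pow :: "'s set \<Rightarrow> ('s \<Rightarrow> 's \<Rightarrow> real) \<Rightarrow> nat \<Rightarrow> 's \<Rightarrow> 's \<Rightarrow> real" where
  "mc_pow X P 0 x y = (if x = y then 1 else 0)"
| "mc_pow X P (Suc k) x y = (\<Sum>z\<in>X. mc_pow X P k x z * P z y)"

definition mc_total_cost ::
  "'s set \<Rightarrow> ('s \<Rightarrow> 's \<Rightarrow> real) \<Rightarrow> ('s \<Rightarrow> real) \<Rightarrow> 's \<Rightarrow> ereal" where
  "mc_total_cost X P c x =
     liminf (\<lambda>t. ereal (\<Sum>k\<le>t. \<Sum>y\<in>X. mc_pow X P k x y * c y))"

text \<open>The absorbing termination state t is reached with probability one from x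
  (the probability of having reached t by time k is mc_pow X P k x t,
  since t is absorbing).\<close>
definition mc_terminates ::
  "'s set \<Rightarrow> ('s \<Rightarrow> 's \<Rightarrow> real) \<Rightarrow> 's \<Rightarrow> 's \<Rightarrow> bool" where
  "mc_terminates X P t x \<longleftrightarrow> (\<lambda>k. mc_pow X P k x t) \<longlonglongrightarrow> 1"

text \<open>States 1..n, termination state 0; U i, V i control sets;
  p i u v j transition probabilities; gh i u v j transition costs (g-hat).\<close>
definition ssp_game ::
  "nat \<Rightarrow> (nat \<Rightarrow> 'u set) \<Rightarrow> (nat \<Rightarrow> 'v set) \<Rightarrow> (nat \<Rightarrow> 'u \<Rightarrow> 'v \<Rightarrow> nat \<Rightarrow> real) \<Rightarrow> bool" where
  "ssp_game n U V p \<longleftrightarrow>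
     (\<forall>i\<in>{1..n}. finite (U i) \<and> U i \<noteq> {} \<and> finite (V i) \<and> V i \<noteq> {} \<and>
        (\<forall>u\<in>U i. \<forall>v\<in>V i. (\<forall>j\<in>{0..n}. 0 \<le> p i u v j) \<and> (\<Sum>j\<in>{0..n}. p i u v j) = 1))"

definition g_exp ::
  "nat \<Rightarrow> (nat \<Rightarrow> 'u \<Rightarrow> 'v \<Rightarrow> nat \<Rightarrow> real) \<Rightarrow> (nat \<Rightarrow> 'u \<Rightarrow> 'v \<Rightarrow> nat \<Rightarrow> real)
     \<Rightarrow> nat \<Rightarrow> 'u \<Rightarrow> 'v \<Rightarrow> real" where
  "g_exp n p gh i u v = (\<Sum>j\<in>{0..n}. p i u v j * gh i u v j)"

definition sr_policy :: "nat \<Rightarrow> (nat \<Rightarrow> 'a set) \<Rightarrow> (nat \<Rightarrow> 'a \<Rightarrow> real) \<Rightarrow> bool" where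
  "sr_policy n W mu \<longleftrightarrow> (\<forall>i\<in>{1..n}. (\<forall>w\<in>W i. 0 \<le> mu i w) \<and> (\<Sum>w\<in>W i. mu i w) = 1)"

definition game_P ::
  "nat \<Rightarrow> (nat \<Rightarrow> 'u set) \<Rightarrow> (nat \<Rightarrow> 'v set) \<Rightarrow> (nat \<Rightarrow> 'u \<Rightarrow> 'v \<Rightarrow> nat \<Rightarrow> real)
     \<Rightarrow> (nat \<Rightarrow> 'u \<Rightarrow> real) \<Rightarrow> (nat \<Rightarrow> 'v \<Rightarrow> real) \<Rightarrow> nat \<Rightarrow> nat \<Rightarrow> real" where
  "game_P n U V p mu nu x y =
     (if x = 0 then (if y = 0 then 1 else 0)
      else (\<Sum>u\<in>U x. \<Sum>v\<in>V x. mu x u * nu x v * p x u v y))"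

definition game_c ::
  "nat \<Rightarrow> (nat \<Rightarrow> 'u set) \<Rightarrow> (nat \<Rightarrow> 'v set) \<Rightarrow> (nat \<Rightarrow> 'u \<Rightarrow> 'v \<Rightarrow> nat \<Rightarrow> real)
     \<Rightarrow> (nat \<Rightarrow> 'u \<Rightarrow> 'v \<Rightarrow> nat \<Rightarrow> real)
     \<Rightarrow> (nat \<Rightarrow> 'u \<Rightarrow> real) \<Rightarrow> (nat \<Rightarrow> 'v \<Rightarrow> real) \<Rightarrow> nat \<Rightarrow> real" where
  "game_c n U V p gh mu nu x =
     (if x = 0 then 0
      else (\<Sum>u\<in>U x. \<Sum>v\<in>V x. mu x u * nu x v * g_exp n p gh x u v))"

definition game_J ::
  "nat \<Rightarrow> (nat \<Rightarrow> 'u set) \<Rightarrow> (nat \<Rightarrow> 'v set) \<Rightarrow> (nat \<Rightarrow> 'u \<Rightarrow> 'v \<Rightarrow> nat \<Rightarrow> real)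
     \<Rightarrow> (nat \<Rightarrow> 'u \<Rightarrow> 'v \<Rightarrow> nat \<Rightarrow> real)
     \<Rightarrow> (nat \<Rightarrow> 'u \<Rightarrow> real) \<Rightarrow> (nat \<Rightarrow> 'v \<Rightarrow> real) \<Rightarrow> nat \<Rightarrow> ereal" where
  "game_J n U V p gh mu nu i =
     mc_total_cost {0..n} (game_P n U V p mu nu) (game_c n U V p gh mu nu) i"

definition prolonging ::
  "nat \<Rightarrow> (nat \<Rightarrow> 'u set) \<Rightarrow> (nat \<Rightarrow> 'v set) \<Rightarrow> (nat \<Rightarrow> 'u \<Rightarrow> 'v \<Rightarrow> nat \<Rightarrow> real)
     \<Rightarrow> (nat \<Rightarrow> 'u \<Rightarrow> real) \<Rightarrow> (nat \<Rightarrow> 'v \<Rightarrow> real) \<Rightarrow> bool" where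
  "prolonging n U V p mu nu \<longleftrightarrow>
     (\<exists>i\<in>{1..n}. \<not> mc_terminates {0..n} (game_P n U V p mu nu) 0 i)"

definition essentially_proper ::
  "nat \<Rightarrow> (nat \<Rightarrow> 'u set) \<Rightarrow> (nat \<Rightarrow> 'v set) \<Rightarrow> (nat \<Rightarrow> 'u \<Rightarrow> 'v \<Rightarrow> nat \<Rightarrow> real)
     \<Rightarrow> (nat \<Rightarrow> 'u \<Rightarrow> 'v \<Rightarrow> nat \<Rightarrow> real) \<Rightarrow> (nat \<Rightarrow> 'v \<Rightarrow> real) \<Rightarrow> bool" where
  "essentially_proper n U V p gh nu \<longleftrightarrow>
     sr_policy n V nu \<and>
     (\<exists>mu. sr_policy n U mu \<and> \<not> prolonging n U V p mu nu) \<and>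
     (\<forall>mu. sr_policy n U mu \<and> prolonging n U V p mu nu \<longrightarrow>
        (\<exists>i\<in>{1..n}. game_J n U V p gh mu nu i = \<infinity>))"

definition game_model_assumption ::
  "nat \<Rightarrow> (nat \<Rightarrow> 'u set) \<Rightarrow> (nat \<Rightarrow> 'v set) \<Rightarrow> (nat \<Rightarrow> 'u \<Rightarrow> 'v \<Rightarrow> nat \<Rightarrow> real)
     \<Rightarrow> (nat \<Rightarrow> 'u \<Rightarrow> 'v \<Rightarrow> nat \<Rightarrow> real) \<Rightarrow> bool" where
  "game_model_assumption n U V p gh \<longleftrightarrow>
     (\<exists>mu. sr_policy n U mu \<and>
        (\<forall>nu. sr_policy n V nu \<longrightarrow> (\<forall>i\<in>{1..n}. game_J n U V p gh mu nu i < \<infinity>))) \<and>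
     (\<exists>nu. sr_policy n V nu \<and>
        (\<forall>mu. sr_policy n U mu \<longrightarrow> (\<forall>i\<in>{1..n}. game_J n U V p gh mu nu i > - \<infinity>))) \<and>
     (\<forall>mu nu. sr_policy n U mu \<and> sr_policy n V nu \<and> prolonging n U V p mu nu \<longrightarrow>
        (\<exists>i\<in>{1..n}. game_J n U V p gh mu nu i \<in> {\<infinity>, - \<infinity>}))"

text \<open>States: Inl i for i in S_o, Inr (i,u,v) for elements of R.\<close>
definition aux_states ::
  "nat \<Rightarrow> (nat \<Rightarrow> 'u set) \<Rightarrow> (nat \<Rightarrow> 'v set) \<Rightarrow> (nat + nat \<times> 'u \<times> 'v) set" where
  "aux_states n U V =
     Inl ` {0..n} \<union> Inr ` {(i, u, v). i \<in> {1..n} \<and> u \<in> U i \<and> v \<in> V i}"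

definition sd_policy :: "nat \<Rightarrow> (nat \<Rightarrow> 'u set) \<Rightarrow> (nat \<Rightarrow> 'u) \<Rightarrow> bool" where
  "sd_policy n U mu \<longleftrightarrow> (\<forall>i\<in>{1..n}. mu i \<in> U i)"

definition aux_P ::
  "(nat \<Rightarrow> 'v set) \<Rightarrow> (nat \<Rightarrow> 'u \<Rightarrow> 'v \<Rightarrow> nat \<Rightarrow> real) \<Rightarrow> (nat \<Rightarrow> 'v \<Rightarrow> real)
     \<Rightarrow> (nat \<Rightarrow> 'u) \<Rightarrow> (nat + nat \<times> 'u \<times> 'v) \<Rightarrow> (nat + nat \<times> 'u \<times> 'v) \<Rightarrow> real" where
  "aux_P V p nub mu x y =
     (case x of
        Inl i \<Rightarrow>
          (if i = 0 then (if y = Inl 0 then 1 else 0)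
           else (case y of Inl j \<Rightarrow> (\<Sum>v\<in>V i. nub i v * p i (mu i) v j) | Inr _ \<Rightarrow> 0))
      | Inr (i, u, v) \<Rightarrow> (case y of Inl j \<Rightarrow> p i u v j | Inr _ \<Rightarrow> 0))"

definition aux_c ::
  "nat \<Rightarrow> (nat \<Rightarrow> 'v set) \<Rightarrow> (nat \<Rightarrow> 'u \<Rightarrow> 'v \<Rightarrow> nat \<Rightarrow> real) \<Rightarrow> (nat \<Rightarrow> 'u \<Rightarrow> 'v \<Rightarrow> nat \<Rightarrow> real)
     \<Rightarrow> (nat \<Rightarrow> 'v \<Rightarrow> real) \<Rightarrow> (nat \<Rightarrow> 'u) \<Rightarrow> (nat + nat \<times> 'u \<times> 'v) \<Rightarrow> real" where
  "aux_c n V p gh nub mu x =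
     (case x of
        Inl i \<Rightarrow> (if i = 0 then 0 else (\<Sum>v\<in>V i. nub i v * g_exp n p gh i (mu i) v))
      | Inr (i, u, v) \<Rightarrow> g_exp n p gh i u v)"

definition aux_proper ::
  "nat \<Rightarrow> (nat \<Rightarrow> 'u set) \<Rightarrow> (nat \<Rightarrow> 'v set) \<Rightarrow> (nat \<Rightarrow> 'u \<Rightarrow> 'v \<Rightarrow> nat \<Rightarrow> real)
     \<Rightarrow> (nat \<Rightarrow> 'v \<Rightarrow> real) \<Rightarrow> (nat \<Rightarrow> 'u) \<Rightarrow> bool" where
  "aux_proper n U V p nub mu \<longleftrightarrow>
     (\<forall>x\<in>aux_states n U V. mc_terminates (aux_states n U V) (aux_P V p nub mu) (Inl 0) x)"

definition aux_cost ::
  "nat \<Rightarrow> (nat \<Rightarrow> 'u set) \<Rightarrow> (nat \<Rightarrow> 'v set) \<Rightarrow> (nat \<Rightarrow> 'u \<Rightarrow> 'v \<Rightarrow> nat \<Rightarrow> real)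
     \<Rightarrow> (nat \<Rightarrow> 'u \<Rightarrow> 'v \<Rightarrow> nat \<Rightarrow> real) \<Rightarrow> (nat \<Rightarrow> 'v \<Rightarrow> real) \<Rightarrow> (nat \<Rightarrow> 'u)
     \<Rightarrow> (nat + nat \<times> 'u \<times> 'v) \<Rightarrow> ereal" where
  "aux_cost n U V p gh nub mu x =
     mc_total_cost (aux_states n U V) (aux_P V p nub mu) (aux_c n V p gh nub mu) x"

definition aux_ssp_model_assumption ::
  "nat \<Rightarrow> (nat \<Rightarrow> 'u set) \<Rightarrow> (nat \<Rightarrow> 'v set) \<Rightarrow> (nat \<Rightarrow> 'u \<Rightarrow> 'v \<Rightarrow> nat \<Rightarrow> real)
     \<Rightarrow> (nat \<Rightarrow> 'u \<Rightarrow> 'v \<Rightarrow> nat \<Rightarrow> real) \<Rightarrow> (nat \<Rightarrow> 'v \<Rightarrow> real) \<Rightarrow> bool" where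
  "aux_ssp_model_assumption n U V p gh nub \<longleftrightarrow>
     (\<exists>mu. sd_policy n U mu \<and> aux_proper n U V p nub mu) \<and>
     (\<forall>mu. sd_policy n U mu \<and> \<not> aux_proper n U V p nub mu \<longrightarrow>
        (\<exists>x\<in>aux_states n U V. aux_cost n U V p gh nub mu x = \<infinity>))"

end

theory Submission
  imports Defs
begin


lemma CK: "finite X \<Longrightarrow> y \<in> X \<Longrightarrow> mc_pow X P (k + m) x y = (\<Sum>z\<in>X. mc_pow X P k x z * mc_pow X P m z y)"
proof (induction m arbitrary: y)
  case 0 thus ?case by (simp add: if_distrib cong: if_cong)
next
  case (Suc m)
  have "mc_pow X P (k + Suc m) x y = (\<Sum>w\<in>X. mc_pow X P (k+m) x w * P w y)" by simp
  also have "\<dots> = (\<Sum>w\<in>X. (\<Sum>z\<in>X. mc_pow X P k x z * mc_pow X P m z w) * P w y)"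
    using Suc(1)[OF Suc(2)] by (intro sum.cong) auto
  also have "\<dots> = (\<Sum>w\<in>X. \<Sum>z\<in>X. mc_pow X P k x z * mc_pow X P m z w * P w y)"
    by (simp add: sum_distrib_right)
  also have "\<dots> = (\<Sum>z\<in>X. \<Sum>w\<in>X. mc_pow X P k x z * mc_pow X P m z w * P w y)"
    by (rule sum.swap)
  also have "\<dots> = (\<Sum>z\<in>X. mc_pow X P k x z * (\<Sum>w\<in>X. mc_pow X P m z w * P w y))"
    by (simp add: sum_distrib_left mult.assoc)
  finally show ?case by simp
qed

lemma first_step: "finite X \<Longrightarrow> x\<in>X \<Longrightarrow> y\<in>X \<Longrightarrow> mc_pow X P (Suc m) x y = (\<Sum>z\<in>X. P x z * mc_pow X P m z y)"
proof -
  assume fin: "finite X" and x: "x\<in>X" and y: "y\<in>X"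
  have one: "mc_pow X P 1 x z = P x z" for z
  proof -
    have "mc_pow X P 1 x z = (\<Sum>w\<in>X. if x = w then P w z else 0)"
      by (simp, rule sum.cong) auto
    thus ?thesis using fin x by simp
  qed
  show ?thesis using CK[OF fin y, where k=1 and m=m and x=x and P=P] unfolding one by simp
qed


locale fchain =
  fixes X :: "'s set" and P :: "'s \<Rightarrow> 's \<Rightarrow> real" and t :: 's
  assumes fin: "finite X" and tX: "t \<in> X"
    and nonneg: "\<And>x y. x\<in>X \<Longrightarrow> y\<in>X \<Longrightarrow> 0 \<le> P x y"
    and rows: "\<And>x. x\<in>X \<Longrightarrow> (\<Sum>y\<in>X. P x y) = 1"
    and absorb: "P t t = 1"
begin

lemma pow_nonneg: "y \<in> X \<Longrightarrow> 0 \<le> mc_pow X P k x y"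
  by (induction k arbitrary: y) (auto intro!: sum_nonneg mult_nonneg_nonneg nonneg)

lemma pow_rows: "x \<in> X \<Longrightarrow> (\<Sum>y\<in>X. mc_pow X P k x y) = 1"
proof (induction k)
  case 0 thus ?case using fin by simp
next
  case (Suc k)
  have "(\<Sum>y\<in>X. mc_pow X P (Suc k) x y) = (\<Sum>y\<in>X. \<Sum>z\<in>X. mc_pow X P k x z * P z y)"
    by simp
  also have "\<dots> = (\<Sum>z\<in>X. \<Sum>y\<in>X. mc_pow X P k x z * P z y)" by (rule sum.swap)
  also have "\<dots> = (\<Sum>z\<in>X. mc_pow X P k x z * (\<Sum>y\<in>X. P z y))"
    by (simp add: sum_distrib_left)
  also have "\<dots> = (\<Sum>z\<in>X. mc_pow X P k x z)" using rows by simp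
  finally show ?case using Suc by simp
qed

lemma Q_mono_step: "t \<in> X \<Longrightarrow> mc_pow X P k x t \<le> mc_pow X P (Suc k) x t"
proof -
  have "mc_pow X P k x t * P t t \<le> (\<Sum>z\<in>X. mc_pow X P k x z * P z t)"
    by (rule member_le_sum) (auto intro!: mult_nonneg_nonneg pow_nonneg nonneg tX fin)
  thus ?thesis using absorb by simp
qed

lemma Q_mono: "k \<le> m \<Longrightarrow> mc_pow X P k x t \<le> mc_pow X P m x t"
  using lift_Suc_mono_le[of "\<lambda>k. mc_pow X P k x t", OF Q_mono_step[OF tX]] by blast

lemma Q_le1: "x\<in>X \<Longrightarrow> mc_pow X P k x t \<le> 1"
proof -
  assume x: "x \<in> X"
  have "mc_pow X P k x t \<le> (\<Sum>y\<in>X. mc_pow X P k x y)"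
    by (rule member_le_sum) (auto intro!: pow_nonneg tX fin)
  thus ?thesis using pow_rows[OF x] by simp
qed

lemma Q_t: "mc_pow X P k t t = 1"
  using Q_mono[of 0 k t] Q_le1[OF tX, of k] by simp

lemma contract:
  assumes x: "x\<in>X" and d: "\<And>z. z\<in>X \<Longrightarrow> \<delta> \<le> mc_pow X P N z t"
  shows "1 - mc_pow X P (k+N) x t \<le> (1-\<delta>) * (1 - mc_pow X P k x t)"
proof -
  have "1 - mc_pow X P (k+N) x t = (\<Sum>z\<in>X. mc_pow X P k x z) - (\<Sum>z\<in>X. mc_pow X P k x z * mc_pow X P N z t)"
    using CK[OF fin tX] pow_rows[OF x] by simp
  also have "\<dots> = (\<Sum>z\<in>X. mc_pow X P k x z * (1 - mc_pow X P N z t))"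
    by (simp add: right_diff_distrib sum_subtractf)
  also have "\<dots> = (\<Sum>z\<in>X-{t}. mc_pow X P k x z * (1 - mc_pow X P N z t))"
    using fin tX Q_t by (simp add: sum.remove)
  also have "\<dots> \<le> (\<Sum>z\<in>X-{t}. mc_pow X P k x z * (1 - \<delta>))"
    by (rule sum_mono) (auto intro!: mult_left_mono pow_nonneg d)
  also have "\<dots> = (1-\<delta>) * (\<Sum>z\<in>X-{t}. mc_pow X P k x z)"
    by (simp add: sum_distrib_left mult.commute)
  also have "\<dots> = (1-\<delta>) * ((\<Sum>z\<in>X. mc_pow X P k x z) - mc_pow X P k x t)"
    using fin tX by (simp add: sum_diff1)
  also have "\<dots> = (1-\<delta>) * (1 - mc_pow X P k x t)" using pow_rows[OF x] by simp
  finally show ?thesis .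
qed

lemma geometric:
  assumes x: "x\<in>X" and d: "\<And>z. z\<in>X \<Longrightarrow> \<delta> \<le> mc_pow X P N z t" and d1: "\<delta> \<le> 1"
  shows "1 - mc_pow X P (j*N) x t \<le> (1-\<delta>)^j"
proof (induction j)
  case 0 show ?case using pow_nonneg[OF tX, of 0 x] by simp
next
  case (Suc j)
  have "1 - mc_pow X P (Suc j*N) x t = 1 - mc_pow X P (j*N + N) x t" by (simp add: add.commute)
  also have "\<dots> \<le> (1-\<delta>) * (1 - mc_pow X P (j*N) x t)" by (rule contract[OF x d])
  also have "\<dots> \<le> (1-\<delta>) * (1-\<delta>)^j" using Suc d1 by (intro mult_left_mono) auto
  finally show ?case by simp
qed

lemma terminates:
  assumes pos: "\<And>x. x\<in>X \<Longrightarrow> \<exists>k. 0 < mc_pow X P k x t" and x: "x \<in> X"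
  shows "mc_terminates X P t x"
proof -
  obtain kf where kf: "\<And>x. x\<in>X \<Longrightarrow> 0 < mc_pow X P (kf x) x t" using pos by metis
  define N where "N = Max (kf ` X)"
  have QN: "0 < mc_pow X P N z t" if "z\<in>X" for z
  proof -
    have "kf z \<le> N" unfolding N_def using fin that by simp
    thus ?thesis using Q_mono[of "kf z" N z] kf[OF that] by simp
  qed
  define \<delta> where "\<delta> = Min ((\<lambda>z. mc_pow X P N z t) ` X)"
  have dle: "\<delta> \<le> mc_pow X P N z t" if "z\<in>X" for z unfolding \<delta>_def using fin that by simp
  have dpos: "0 < \<delta>" unfolding \<delta>_def using fin tX QN by (subst Min_gr_iff) auto
  have d1: "\<delta> \<le> 1" using dle[OF tX] Q_t by simp
  show ?thesis unfolding mc_terminates_def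
  proof (rule LIMSEQ_I)
    fix r :: real assume r: "0 < r"
    have "1 - \<delta> < 1" using dpos by simp
    then obtain j where j: "(1-\<delta>)^j < r" using real_arch_pow_inv[OF r] by blast
    show "\<exists>no. \<forall>m\<ge>no. norm (mc_pow X P m x t - 1) < r"
    proof (rule exI[of _ "j*N"], intro allI impI)
      fix m assume "j*N \<le> m"
      hence "mc_pow X P (j*N) x t \<le> mc_pow X P m x t" by (rule Q_mono)
      moreover have "1 - mc_pow X P (j*N) x t \<le> (1-\<delta>)^j" by (rule geometric[OF x dle d1])
      moreover have "mc_pow X P m x t \<le> 1" by (rule Q_le1[OF x])
      ultimately have "\<bar>mc_pow X P m x t - 1\<bar> < r" using j by linarith
      thus "norm (mc_pow X P m x t - 1) < r" by (simp only: real_norm_def)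
    qed
  qed
qed

lemma terminates_pos:
  assumes "mc_terminates X P t x" shows "\<exists>k. 0 < mc_pow X P k x t"
proof -
  have "eventually (\<lambda>k. 0 < mc_pow X P k x t) sequentially"
    using assms unfolding mc_terminates_def by (rule order_tendstoD) simp
  thus ?thesis by (auto simp: eventually_sequentially)
qed

end


definition ind :: "(nat \<Rightarrow> 'u) \<Rightarrow> nat \<Rightarrow> 'u \<Rightarrow> real" where
  "ind md i u = (if u = md i then 1 else 0)"

lemma ind_sum:
  assumes "finite U" "md i \<in> U"
  shows "(\<Sum>u\<in>U. \<Sum>v\<in>V. ind md i u * f v * h u v) = (\<Sum>v\<in>V. f v * h (md i) v)"
proof -
  have "(\<Sum>u\<in>U. \<Sum>v\<in>V. ind md i u * f v * h u v) = (\<Sum>u\<in>U. if u = md i then (\<Sum>v\<in>V. f v * h (md i) v) else 0)"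
    by (rule sum.cong) (auto simp: ind_def)
  also have "\<dots> = (\<Sum>v\<in>V. f v * h (md i) v)" using assms by simp
  finally show ?thesis .
qed

lemma game_chain:
  assumes G: "ssp_game n U V p" and mu: "sr_policy n U mu" and nu: "sr_policy n V nu"
  shows "fchain {0..n} (game_P n U V p mu nu) 0"
proof
  fix x y assume x: "x \<in> {0..n}" and y: "y \<in> {0..n}"
  show "0 \<le> game_P n U V p mu nu x y"
  proof (cases "x = 0")
    case False
    hence "x \<in> {1..n}" using x by auto
    thus ?thesis using G mu nu y False unfolding game_P_def ssp_game_def sr_policy_def
      by (auto intro!: sum_nonneg mult_nonneg_nonneg)
  qed (simp add: game_P_def)
next
  fix x assume x: "x \<in> {0..n}"
  show "(\<Sum>y\<in>{0..n}. game_P n U V p mu nu x y) = 1"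
  proof (cases "x = 0")
    case True thus ?thesis by (simp add: game_P_def)
  next
    case False
    hence x1: "x \<in> {1..n}" using x by auto
    have "(\<Sum>y\<in>{0..n}. game_P n U V p mu nu x y) =
          (\<Sum>y\<in>{0..n}. \<Sum>u\<in>U x. \<Sum>v\<in>V x. mu x u * nu x v * p x u v y)"
      using False by (simp add: game_P_def)
    also have "\<dots> = (\<Sum>u\<in>U x. \<Sum>y\<in>{0..n}. \<Sum>v\<in>V x. mu x u * nu x v * p x u v y)"
      by (rule sum.swap)
    also have "\<dots> = (\<Sum>u\<in>U x. \<Sum>v\<in>V x. \<Sum>y\<in>{0..n}. mu x u * nu x v * p x u v y)"
      by (rule sum.cong[OF refl], rule sum.swap)
    also have "\<dots> = (\<Sum>u\<in>U x. \<Sum>v\<in>V x. mu x u * nu x v * (\<Sum>y\<in>{0..n}. p x u v y))"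
      by (simp add: sum_distrib_left)
    also have "\<dots> = (\<Sum>u\<in>U x. mu x u * (\<Sum>v\<in>V x. nu x v))"
      using G x1 unfolding ssp_game_def by (simp add: sum_distrib_left)
    also have "\<dots> = 1" using mu nu x1 unfolding sr_policy_def by simp
    finally show ?thesis .
  qed
qed (auto simp: game_P_def)

lemma sr_ind:
  assumes G: "ssp_game n U V p" and sd: "sd_policy n U md"
  shows "sr_policy n U (ind md)"
  unfolding sr_policy_def
proof (rule ballI)
  fix i assume i: "i \<in> {1..n}"
  have f: "finite (U i)" using G i by (simp add: ssp_game_def)
  have m: "md i \<in> U i" using sd i by (simp add: sd_policy_def)
  have "(\<Sum>w\<in>U i. ind md i w) = 1" using f m by (simp add: ind_def)
  thus "(\<forall>w\<in>U i. 0 \<le> ind md i w) \<and> (\<Sum>w\<in>U i. ind md i w) = 1" by (simp add: ind_def)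
qed

definition Rs :: "nat \<Rightarrow> (nat \<Rightarrow> 'u set) \<Rightarrow> (nat \<Rightarrow> 'v set) \<Rightarrow> (nat \<times> 'u \<times> 'v) set" where
  "Rs n U V = {(i, u, v). i \<in> {1..n} \<and> u \<in> U i \<and> v \<in> V i}"

lemma Rs_finite:
  assumes G: "ssp_game n U V p" shows "finite (Rs n U V)"
proof -
  have "Rs n U V \<subseteq> Sigma {1..n} (\<lambda>i. U i \<times> V i)" by (auto simp: Rs_def)
  moreover have "finite (Sigma {1..n} (\<lambda>i. U i \<times> V i))"
    using G by (intro finite_SigmaI) (auto simp: ssp_game_def)
  ultimately show ?thesis by (rule finite_subset)
qed

lemma aux_states_eq: "aux_states n U V = Inl ` {0..n} \<union> Inr ` Rs n U V"
  by (simp add: aux_states_def Rs_def)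

lemma aux_finite: assumes G: "ssp_game n U V p" shows "finite (aux_states n U V)"
  using Rs_finite[OF G] by (simp add: aux_states_eq)

lemma aux_P_lr: "aux_P V p nub md (Inl j) (Inr r) = 0"
  by (simp add: aux_P_def)

lemma aux_sum_split:
  assumes G: "ssp_game n U V p"
  shows "(\<Sum>z\<in>aux_states n U V. F z) = (\<Sum>j\<in>{0..n}. F (Inl j)) + (\<Sum>r\<in>Rs n U V. F (Inr r))"
proof -
  have "(\<Sum>z\<in>aux_states n U V. F z) = (\<Sum>z\<in>Inl ` {0..n}. F z) + (\<Sum>z\<in>Inr ` Rs n U V. F z)"
    unfolding aux_states_eq using Rs_finite[OF G] by (intro sum.union_disjoint) auto
  also have "\<dots> = (\<Sum>j\<in>{0..n}. F (Inl j)) + (\<Sum>r\<in>Rs n U V. F (Inr r))"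
    by (simp add: sum.reindex)
  finally show ?thesis .
qed

lemma aux_P_game:
  assumes G: "ssp_game n U V p" and sd: "sd_policy n U md" and j: "j \<in> {0..n}"
  shows "aux_P V p nub md (Inl j) (Inl j') = game_P n U V p (ind md) nub j j'"
proof (cases "j = 0")
  case True thus ?thesis by (simp add: aux_P_def game_P_def)
next
  case False
  hence j1: "j \<in> {1..n}" using j by auto
  have "finite (U j)" using G j1 by (simp add: ssp_game_def)
  moreover have "md j \<in> U j" using sd j1 by (simp add: sd_policy_def)
  ultimately have "(\<Sum>u\<in>U j. \<Sum>v\<in>V j. ind md j u * nub j v * p j u v j') = (\<Sum>v\<in>V j. nub j v * p j (md j) v j')"
    by (rule ind_sum)
  thus ?thesis using False by (simp add: aux_P_def game_P_def)
qed

lemma aux_c_game: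
  assumes G: "ssp_game n U V p" and sd: "sd_policy n U md" and j: "j \<in> {0..n}"
  shows "aux_c n V p gh nub md (Inl j) = game_c n U V p gh (ind md) nub j"
proof (cases "j = 0")
  case True thus ?thesis by (simp add: aux_c_def game_c_def)
next
  case False
  hence j1: "j \<in> {1..n}" using j by auto
  have "finite (U j)" using G j1 by (simp add: ssp_game_def)
  moreover have "md j \<in> U j" using sd j1 by (simp add: sd_policy_def)
  ultimately have "(\<Sum>u\<in>U j. \<Sum>v\<in>V j. ind md j u * nub j v * g_exp n p gh j u v) = (\<Sum>v\<in>V j. nub j v * g_exp n p gh j (md j) v)"
    by (rule ind_sum)
  thus ?thesis using False by (simp add: aux_c_def game_c_def)
qed

lemma aux_pow:
  assumes G: "ssp_game n U V p" and sd: "sd_policy n U md" and i: "i \<in> {0..n}"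
  shows "y \<in> aux_states n U V \<Longrightarrow> mc_pow (aux_states n U V) (aux_P V p nub md) k (Inl i) y =
     (case y of Inl j \<Rightarrow> mc_pow {0..n} (game_P n U V p (ind md) nub) k i j | Inr _ \<Rightarrow> 0)"
proof (induction k arbitrary: y)
  case 0 thus ?case by (cases y) auto
next
  case (Suc k)
  have IHl: "mc_pow (aux_states n U V) (aux_P V p nub md) k (Inl i) (Inl j) = mc_pow {0..n} (game_P n U V p (ind md) nub) k i j"
    if "j \<in> {0..n}" for j using Suc.IH[of "Inl j"] that by (simp add: aux_states_def)
  have IHr: "mc_pow (aux_states n U V) (aux_P V p nub md) k (Inl i) (Inr r) = 0"
    if "r \<in> Rs n U V" for r using Suc.IH[of "Inr r"] that by (simp add: aux_states_eq)
  have "mc_pow (aux_states n U V) (aux_P V p nub md) (Suc k) (Inl i) y =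
     (\<Sum>j\<in>{0..n}. mc_pow {0..n} (game_P n U V p (ind md) nub) k i j * aux_P V p nub md (Inl j) y)"
    by (simp add: aux_sum_split[OF G] IHl IHr)
  also have "\<dots> = (case y of Inl j \<Rightarrow> mc_pow {0..n} (game_P n U V p (ind md) nub) (Suc k) i j | Inr _ \<Rightarrow> 0)"
  proof (cases y)
    case (Inl j') thus ?thesis by (simp add: aux_P_game[OF G sd])
  next
    case (Inr r) thus ?thesis by (simp add: aux_P_lr)
  qed
  finally show ?case .
qed

lemma aux_pow_l:
  assumes G: "ssp_game n U V p" and sd: "sd_policy n U md" and i: "i \<in> {0..n}" and j: "j \<in> {0..n}"
  shows "mc_pow (aux_states n U V) (aux_P V p nub md) k (Inl i) (Inl j) = mc_pow {0..n} (game_P n U V p (ind md) nub) k i j"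
  using aux_pow[OF G sd i, of "Inl j"] j by (simp add: aux_states_def)

lemma aux_pow_r:
  assumes G: "ssp_game n U V p" and sd: "sd_policy n U md" and i: "i \<in> {0..n}" and r: "r \<in> Rs n U V"
  shows "mc_pow (aux_states n U V) (aux_P V p nub md) k (Inl i) (Inr r) = 0"
  using aux_pow[OF G sd i, of "Inr r"] r by (simp add: aux_states_eq)

lemma aux_cost_eq:
  assumes G: "ssp_game n U V p" and sd: "sd_policy n U md" and i: "i \<in> {0..n}"
  shows "aux_cost n U V p gh nub md (Inl i) = game_J n U V p gh (ind md) nub i"
proof -
  have "(\<Sum>y\<in>aux_states n U V. mc_pow (aux_states n U V) (aux_P V p nub md) k (Inl i) y * aux_c n V p gh nub md y)
      = (\<Sum>j\<in>{0..n}. mc_pow {0..n} (game_P n U V p (ind md) nub) k i j * game_c n U V p gh (ind md) nub j)" for k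
    by (simp add: aux_sum_split[OF G] aux_pow_l[OF G sd i] aux_pow_r[OF G sd i] aux_c_game[OF G sd])
  thus ?thesis by (simp add: aux_cost_def game_J_def mc_total_cost_def)
qed

lemma aux_proper_of:
  assumes G: "ssp_game n U V p" and sd: "sd_policy n U md"
    and T: "\<forall>i\<in>{0..n}. mc_terminates {0..n} (game_P n U V p (ind md) nub) 0 i"
  shows "aux_proper n U V p nub md"
  unfolding aux_proper_def
proof
  fix x assume x: "x \<in> aux_states n U V"
  have l0: "Inl 0 \<in> aux_states n U V" by (simp add: aux_states_def)
  show "mc_terminates (aux_states n U V) (aux_P V p nub md) (Inl 0) x"
  proof (cases x)
    case (Inl i)
    hence i: "i \<in> {0..n}" using x by (auto simp: aux_states_def)
    show ?thesis using T i unfolding Inl mc_terminates_def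
      by (simp add: aux_pow_l[OF G sd i])
  next
    case (Inr r)
    then obtain i u v where r: "r = (i,u,v)" and rR: "r \<in> Rs n U V" using x
      by (auto simp: aux_states_eq)
    have i: "i \<in> {1..n}" and u: "u \<in> U i" and v: "v \<in> V i" using rR r by (auto simp: Rs_def)
    have step: "mc_pow (aux_states n U V) (aux_P V p nub md) (Suc m) x (Inl 0) =
        (\<Sum>j\<in>{0..n}. p i u v j * mc_pow {0..n} (game_P n U V p (ind md) nub) m j 0)" for m
    proof -
      have "mc_pow (aux_states n U V) (aux_P V p nub md) (Suc m) x (Inl 0) =
         (\<Sum>z\<in>aux_states n U V. aux_P V p nub md x z * mc_pow (aux_states n U V) (aux_P V p nub md) m z (Inl 0))"
        by (rule first_step[OF aux_finite[OF G] x l0])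
      also have "\<dots> = (\<Sum>j\<in>{0..n}. p i u v j * mc_pow (aux_states n U V) (aux_P V p nub md) m (Inl j) (Inl 0))"
        by (simp add: aux_sum_split[OF G] Inr r aux_P_def)
      also have "\<dots> = (\<Sum>j\<in>{0..n}. p i u v j * mc_pow {0..n} (game_P n U V p (ind md) nub) m j 0)"
        by (rule sum.cong[OF refl]) (simp add: aux_pow_l[OF G sd])
      finally show ?thesis .
    qed
    have "(\<lambda>m. \<Sum>j\<in>{0..n}. p i u v j * mc_pow {0..n} (game_P n U V p (ind md) nub) m j 0)
          \<longlonglongrightarrow> (\<Sum>j\<in>{0..n}. p i u v j * 1)"
      using T unfolding mc_terminates_def by (intro tendsto_sum tendsto_mult tendsto_const) auto
    moreover have "(\<Sum>j\<in>{0..n}. p i u v j * 1) = 1" using G i u v by (simp add: ssp_game_def)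
    ultimately have "(\<lambda>m. mc_pow (aux_states n U V) (aux_P V p nub md) (Suc m) x (Inl 0)) \<longlonglongrightarrow> 1"
      unfolding step by simp
    thus ?thesis unfolding mc_terminates_def by (rule LIMSEQ_imp_Suc)
  qed
qed

lemma exists_proper_det:
  assumes G: "ssp_game n U V p" and mu: "sr_policy n U mu" and nu: "sr_policy n V nub"
    and T: "\<forall>i\<in>{0..n}. mc_terminates {0..n} (game_P n U V p mu nub) 0 i"
  shows "\<exists>md. sd_policy n U md \<and> (\<forall>i\<in>{0..n}. mc_terminates {0..n} (game_P n U V p (ind md) nub) 0 i)"
proof -
  define Pm where "Pm = game_P n U V p mu nub"
  interpret C: fchain "{0..n}" Pm 0 using game_chain[OF G mu nu] by (simp add: Pm_def)
  define d where "d i = (LEAST k. 0 < mc_pow {0..n} Pm k i 0)" for i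
  have dpos: "0 < mc_pow {0..n} Pm (d i) i 0" if "i \<in> {0..n}" for i
  proof -
    have "\<exists>k. 0 < mc_pow {0..n} Pm k i 0" using T that C.terminates_pos by (simp add: Pm_def)
    thus ?thesis unfolding d_def by (rule LeastI_ex)
  qed
  have dle: "d z \<le> k" if "0 < mc_pow {0..n} Pm k z 0" for z k
    unfolding d_def using that by (rule Least_le)
  have dnz: "d i \<noteq> 0" if "i \<in> {1..n}" for i
  proof
    assume "d i = 0"
    thus False using dpos[of i] that by simp
  qed
  have choice: "\<exists>u. u \<in> U i \<and> (\<exists>z\<in>{0..n}. 0 < (\<Sum>v\<in>V i. nub i v * p i u v z) \<and> d z < d i)"
    if i: "i \<in> {1..n}" for i
  proof -
    obtain m where dm: "d i = Suc m" using dnz[OF i] not0_implies_Suc by blast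
    have i0: "i \<in> {0..n}" using i by auto
    have "0 < (\<Sum>z\<in>{0..n}. Pm i z * mc_pow {0..n} Pm m z 0)"
      using dpos[OF i0] first_step[of "{0..n}" i 0 Pm m] i0 by (simp add: dm)
    then obtain z where z: "z \<in> {0..n}" and zp: "0 < Pm i z * mc_pow {0..n} Pm m z 0"
      by (metis (no_types, lifting) not_less sum_nonpos)
    have "0 \<le> Pm i z" using C.nonneg i0 z by simp
    moreover have "0 \<le> mc_pow {0..n} Pm m z 0" using C.pow_nonneg by simp
    ultimately have Pz: "0 < Pm i z" and mz: "0 < mc_pow {0..n} Pm m z 0"
      using zp by (auto simp: zero_less_mult_iff)
    have dz: "d z < d i" using dle[OF mz] dm by simp
    have "\<exists>u\<in>U i. 0 < (\<Sum>v\<in>V i. nub i v * p i u v z)"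
    proof (rule ccontr)
      assume "\<not> ?thesis"
      hence neg: "\<And>u. u \<in> U i \<Longrightarrow> (\<Sum>v\<in>V i. nub i v * p i u v z) \<le> 0" by auto
      have "Pm i z = (\<Sum>u\<in>U i. mu i u * (\<Sum>v\<in>V i. nub i v * p i u v z))"
        using i by (simp add: Pm_def game_P_def sum_distrib_left mult.assoc)
      also have "\<dots> \<le> 0"
      proof (rule sum_nonpos)
        fix u assume u: "u \<in> U i"
        have h1: "0 \<le> mu i u" using mu i u by (simp add: sr_policy_def)
        show "mu i u * (\<Sum>v\<in>V i. nub i v * p i u v z) \<le> 0"
          by (rule mult_nonneg_nonpos[OF h1 neg[OF u]])
      qed
      finally show False using Pz by simp
    qed
    thus ?thesis using z dz by blast
  qed
  define md where "md i = (SOME u. u \<in> U i \<and> (\<exists>z\<in>{0..n}. 0 < (\<Sum>v\<in>V i. nub i v * p i u v z) \<and> d z < d i))" for i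
  have mdspec: "md i \<in> U i \<and> (\<exists>z\<in>{0..n}. 0 < (\<Sum>v\<in>V i. nub i v * p i (md i) v z) \<and> d z < d i)"
    if "i \<in> {1..n}" for i
    unfolding md_def by (rule someI_ex[OF choice[OF that]])
  have sd: "sd_policy n U md" using mdspec by (simp add: sd_policy_def)
  define Pd where "Pd = game_P n U V p (ind md) nub"
  interpret D: fchain "{0..n}" Pd 0 using game_chain[OF G sr_ind[OF G sd] nu] by (simp add: Pd_def)
  have Pd_eq: "Pd i z = (\<Sum>v\<in>V i. nub i v * p i (md i) v z)" if i: "i \<in> {1..n}" for i z
  proof -
    have "finite (U i)" using G i by (simp add: ssp_game_def)
    moreover have "md i \<in> U i" using mdspec[OF i] by simp
    ultimately have "(\<Sum>u\<in>U i. \<Sum>v\<in>V i. ind md i u * nub i v * p i u v z) = (\<Sum>v\<in>V i. nub i v * p i (md i) v z)"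
      by (rule ind_sum)
    thus ?thesis using i by (simp add: Pd_def game_P_def)
  qed
  have key: "\<forall>i\<in>{0..n}. d i \<le> k \<longrightarrow> 0 < mc_pow {0..n} Pd k i 0" for k
  proof (induction k)
    case 0
    show ?case
    proof (intro ballI impI)
      fix i assume i: "i \<in> {0..n}" and "d i \<le> 0"
      hence "i = 0" using dnz[of i] by (cases "i = 0") auto
      thus "0 < mc_pow {0..n} Pd 0 i 0" by simp
    qed
  next
    case (Suc k)
    show ?case
    proof (intro ballI impI)
      fix i assume i: "i \<in> {0..n}" and di: "d i \<le> Suc k"
      show "0 < mc_pow {0..n} Pd (Suc k) i 0"
      proof (cases "i = 0")
        case True thus ?thesis using D.Q_t[of "Suc k"] by (simp del: mc_pow.simps)
      next
        case False
        hence i1: "i \<in> {1..n}" using i by auto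
        obtain z where z: "z \<in> {0..n}" and zp: "0 < (\<Sum>v\<in>V i. nub i v * p i (md i) v z)" and dz: "d z < d i"
          using mdspec[OF i1] by blast
        have Pz: "0 < Pd i z" using zp Pd_eq[OF i1] by simp
        have mz: "0 < mc_pow {0..n} Pd k z 0" using Suc.IH z dz di by simp
        have "Pd i z * mc_pow {0..n} Pd k z 0 \<le> (\<Sum>z'\<in>{0..n}. Pd i z' * mc_pow {0..n} Pd k z' 0)"
          using z i by (intro member_le_sum mult_nonneg_nonneg D.nonneg D.pow_nonneg) auto
        also have "\<dots> = mc_pow {0..n} Pd (Suc k) i 0"
          using first_step[of "{0..n}" i 0 Pd k] i by simp
        finally show ?thesis using Pz mz by (smt (verit) mult_pos_pos)
      qed
    qed
  qed
  have "\<forall>i\<in>{0..n}. mc_terminates {0..n} Pd 0 i"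
    using key by (intro ballI D.terminates) blast+
  thus ?thesis using sd by (auto simp: Pd_def)
qed

theorem lemma4p2:
  fixes n :: nat
    and U :: "nat \<Rightarrow> 'u set" and V :: "nat \<Rightarrow> 'v set"
    and p :: "nat \<Rightarrow> 'u \<Rightarrow> 'v \<Rightarrow> nat \<Rightarrow> real"
    and gh :: "nat \<Rightarrow> 'u \<Rightarrow> 'v \<Rightarrow> nat \<Rightarrow> real"
    and nub :: "nat \<Rightarrow> 'v \<Rightarrow> real"
  assumes "ssp_game n U V p"
    and "game_model_assumption n U V p gh"
    and "essentially_proper n U V p gh nub"
  shows "aux_ssp_model_assumption n U V p gh nub"
proof -
  note G = assms(1)
  have nu: "sr_policy n V nub" using assms(3) by (simp add: essentially_proper_def)
  have term0: "mc_terminates {0..n} (game_P n U V p mu nub) 0 0" if "sr_policy n U mu" for mu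
  proof -
    interpret C: fchain "{0..n}" "game_P n U V p mu nub" 0 by (rule game_chain[OF G that nu])
    show ?thesis unfolding mc_terminates_def by (simp add: C.Q_t)
  qed
  have allterm: "\<forall>i\<in>{0..n}. mc_terminates {0..n} (game_P n U V p mu nub) 0 i"
    if "sr_policy n U mu" "\<not> prolonging n U V p mu nub" for mu
  proof
    fix i assume i: "i \<in> {0..n}"
    show "mc_terminates {0..n} (game_P n U V p mu nub) 0 i"
    proof (cases "i = 0")
      case True thus ?thesis using term0[OF that(1)] by simp
    next
      case False thus ?thesis using that(2) i by (auto simp: prolonging_def)
    qed
  qed
  obtain mu where mu: "sr_policy n U mu" and np: "\<not> prolonging n U V p mu nub"
    using assms(3) by (auto simp: essentially_proper_def)
  obtain md where sd: "sd_policy n U md"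
    and Td: "\<forall>i\<in>{0..n}. mc_terminates {0..n} (game_P n U V p (ind md) nub) 0 i"
    using exists_proper_det[OF G mu nu allterm[OF mu np]] by blast
  have part1: "\<exists>mu. sd_policy n U mu \<and> aux_proper n U V p nub mu"
    using sd aux_proper_of[OF G sd Td] by blast
  have part2: "\<exists>x\<in>aux_states n U V. aux_cost n U V p gh nub md' x = \<infinity>"
    if sd': "sd_policy n U md'" and imp: "\<not> aux_proper n U V p nub md'" for md'
  proof -
    have sr': "sr_policy n U (ind md')" by (rule sr_ind[OF G sd'])
    have "prolonging n U V p (ind md') nub"
      using imp aux_proper_of[OF G sd'] allterm[OF sr'] by blast
    then obtain i where i: "i \<in> {1..n}" and J: "game_J n U V p gh (ind md') nub i = \<infinity>"
      using assms(3) sr' unfolding essentially_proper_def by blast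
    have "aux_cost n U V p gh nub md' (Inl i) = \<infinity>" using aux_cost_eq[OF G sd', of i] i J by simp
    moreover have "Inl i \<in> aux_states n U V" using i by (simp add: aux_states_def)
    ultimately show ?thesis by blast
  qed
  show ?thesis unfolding aux_ssp_model_assumption_def using part1 part2 by blast
qed

end
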